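(* For $m\ge0$ let $p_m(x)=1+\sum_{i=1}^m (ix)^i$. Then $p_m$ has no real root if $m$ is even and exactly one real root (counted with multiplicity) if $m$ is odd. *)

theory Defs
  imports "HOL-Computational_Algebra.Polynomial"
begin

definition pm :: "nat \<Rightarrow> real poly" where
  "pm m = 1 + (\<Sum>i=1..m. monom (real i ^ i) i)"

lemma poly_pm: "poly (pm m) x = 1 + (\<Sum>i=1..m. (real i * x) ^ i)"
  by (simp add: pm_def poly_sum poly_monom power_mult_distrib)

end

theory Submission imports Defs begin

lemma bern:
  fixes N :: real and e :: nat
  assumes "N \<ge> 1"
  shows "N^e * (1 - real e / N) \<le> (N-1)^e"
proof -
  have "1 + real e * (-1/N) \<le> (1 + (-1/N))^e"
    by (rule Bernoulli_inequality) (use assms in \<open>simp add: field_simps\<close>)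
  also have "(1 + (-1/N))^e = (N-1)^e / N^e"
    using assms by (simp add: power_divide field_simps)
  finally have "1 - real e / N \<le> (N-1)^e / N^e" by simp
  then show ?thesis using assms by (simp add: field_simps)
qed

lemma C1:
  fixes i :: nat
  shows "(real i+1)^(2*i+2) \<le> real i^i * (real i+2)^(i+2)"
proof (cases "i=0")
  case True then show ?thesis by simp
next
  case False
  define N where "N = (real i+1)^2"
  have N1: "N \<ge> 1" unfolding N_def by simp
  have e2: "N - 1 = real i * (real i + 2)" unfolding N_def by (simp add: power2_eq_square algebra_simps)
  have b: "N^i * (1 - real i / N) \<le> (real i * (real i + 2))^i" using bern[OF N1, of i] e2 by simp
  have poly: "N * N \<le> (N - real i) * (real i+2)^2"
    unfolding N_def by (simp add: power2_eq_square algebra_simps)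
  have "N \<le> (1 - real i / N) * (real i+2)^2"
    using poly N1 by (simp add: field_simps)
  then have "N^i * N \<le> N^i * ((1 - real i / N) * (real i+2)^2)"
    by (rule mult_left_mono) (use N1 in simp)
  also have "\<dots> \<le> (real i * (real i + 2))^i * (real i+2)^2"
    using b by (simp add: mult.assoc[symmetric] mult_right_mono)
  also have "(real i * (real i + 2))^i * (real i+2)^2 = real i^i * (real i+2)^(i+2)"
    by (simp add: power_mult_distrib power_add power2_eq_square)
  finally have "N^(i+1) \<le> real i^i * (real i+2)^(i+2)"
    by (simp add: mult.commute)
  moreover have "N^(i+1) = (real i+1)^(2*i+2)"
    unfolding N_def power_mult[symmetric] by (simp add: algebra_simps)
  ultimately show ?thesis by simp
qed

lemma C2:
  fixes i :: nat
  assumes "i \<ge> 1"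
  shows "(real i+1)^(2*i+4) \<le> real i^(i+1) * (real i+2)^(i+3)"
proof -
  define N where "N = (real i+1)^2"
  have N1: "N \<ge> 1" unfolding N_def by simp
  have e2: "N - 1 = real i * (real i + 2)" unfolding N_def by (simp add: power2_eq_square algebra_simps)
  have b: "N^(i+1) * (1 - real (i+1) / N) \<le> (real i * (real i + 2))^(i+1)" using bern[OF N1, of "i+1"] e2 by simp
  have poly: "N * N \<le> (N - real (i+1)) * (real i+2)^2"
  proof -
    have a: "real i \<ge> 1" using assms by simp
    have b: "1 \<le> real i * real i" using mult_mono[OF a a] by simp
    then have c: "1 \<le> real i * (real i * real i)" using mult_mono[OF a b] by simp
    moreover have "0 \<le> real i * (real i * 2)" by simp
    ultimately have "1 \<le> real i * (real i * real i) + real i * (real i * 2)" by linarith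
    then show ?thesis unfolding N_def by (simp add: power2_eq_square algebra_simps)
  qed
  have "N \<le> (1 - real (i+1) / N) * (real i+2)^2"
    using poly N1 by (simp add: field_simps)
  then have "N^(i+1) * N \<le> N^(i+1) * ((1 - real (i+1) / N) * (real i+2)^2)"
    by (rule mult_left_mono) (use N1 in simp)
  also have "\<dots> \<le> (real i * (real i + 2))^(i+1) * (real i+2)^2"
    using b by (simp add: mult.assoc[symmetric] mult_right_mono)
  also have "(real i * (real i + 2))^(i+1) * (real i+2)^2 = real i^(i+1) * (real i+2)^(i+3)"
    by (simp add: power_mult_distrib power_add numeral_3_eq_3 power2_eq_square)
  finally have "N^(i+2) \<le> real i^(i+1) * (real i+2)^(i+3)"
    by (simp add: mult.commute)
  moreover have "N^(i+2) = (real i+1)^(2*i+4)"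
  proof -
    have "2*i+4 = 2*(i+2)" by simp
    then show ?thesis unfolding N_def by (simp only: power_mult)
  qed
  ultimately show ?thesis by simp
qed

lemma sum_shift2: "(\<Sum>i\<le>Suc (Suc k). f i) = f 0 + f 1 + (\<Sum>i\<le>k. f (i+2))"
  for f :: "nat \<Rightarrow> real"
  by (subst sum.atMost_Suc_shift, subst sum.atMost_Suc_shift) (simp add: add.assoc)

lemma alt_incr:
  fixes a :: "nat \<Rightarrow> real"
  assumes "\<And>i. a i \<le> a (Suc i)" "a 0 > 0"
  shows "(\<Sum>i\<le>2*n. (-1)^i * a i) > 0"
proof (induction n)
  case 0 then show ?case using assms by simp
next
  case (Suc n)
  have "2 * Suc n = Suc (Suc (2*n))" by simp
  then have "(\<Sum>i\<le>2*Suc n. (-1)^i * a i) = (\<Sum>i\<le>2*n. (-1)^i * a i) + (a (Suc (Suc (2*n))) - a (Suc (2*n)))"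
    by simp
  moreover have "a (Suc (2*n)) \<le> a (Suc (Suc (2*n)))" using assms(1) by blast
  ultimately show ?case using Suc by simp
qed

lemma alt_neg:
  fixes a :: "nat \<Rightarrow> real"
  assumes "\<And>i. a i \<le> a (Suc i)" "a 0 < a 1"
  shows "(\<Sum>i\<le>2*n+1. (-1)^i * a i) < 0"
proof (induction n)
  case 0 then show ?case using assms by simp
next
  case (Suc n)
  have "2 * Suc n + 1 = Suc (Suc (2*n+1))" by simp
  then have "(\<Sum>i\<le>2*Suc n+1. (-1)^i * a i) = (\<Sum>i\<le>2*n+1. (-1)^i * a i) + (a (Suc (2*n+1)) - a (Suc (Suc (2*n+1))))"
    by simp
  moreover have "a (Suc (2*n+1)) \<le> a (Suc (Suc (2*n+1)))" using assms(1) by blast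
  ultimately show ?case using Suc by simp
qed

lemma alt_logconvex:
  fixes a :: "nat \<Rightarrow> real"
  assumes "\<And>i. a i > 0" "\<And>i. a (Suc i) * a (Suc i) \<le> a i * a (Suc (Suc i))"
  shows "(\<Sum>i\<le>2*n. (-1)^i * a i) > 0"
  using assms
proof (induction n arbitrary: a)
  case 0 then show ?case by simp
next
  case (Suc n)
  note pos = Suc.prems(1) and lc = Suc.prems(2)
  show ?case
  proof (cases "a 0 < a 1")
    case True
    have mono: "a i < a (Suc i)" for i
    proof (induction i)
      case 0 then show ?case using True by simp
    next
      case (Suc i)
      have "a (Suc i) * a (Suc i) \<le> a i * a (Suc (Suc i))" by (rule lc)
      also have "\<dots> < a (Suc i) * a (Suc (Suc i))"
        using Suc.IH pos[of "Suc (Suc i)"] by (simp add: mult_strict_right_mono)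
      finally show ?case using pos[of "Suc i"] by simp
    qed
    show ?thesis by (rule alt_incr) (use mono less_imp_le Suc.prems in auto)
  next
    case False
    have "2 * Suc n = Suc (Suc (2*n))" by simp
    then have "(\<Sum>i\<le>2*Suc n. (-1)^i * a i) = a 0 - a 1 + (\<Sum>i\<le>2*n. (-1)^i * a (i+2))"
      by (simp only: sum_shift2) simp
    moreover have "(\<Sum>i\<le>2*n. (-1)^i * a (i+2)) > 0"
      by (rule Suc.IH) (use Suc.prems in auto)
    ultimately show ?thesis using False by simp
  qed
qed


lemma C2':
  fixes j :: nat
  shows "(real j+2)^(2*j+6) \<le> (real j+1)^(j+2) * (real j+3)^(j+4)"
proof -
  have h: "(real (Suc j)+1)^(2*Suc j+4) \<le> real (Suc j)^(Suc j+1) * (real (Suc j)+2)^(Suc j+3)"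
    by (rule C2) simp
  have e: "real (Suc j) + 1 = real j+2" "real (Suc j)+2 = real j+3" "real (Suc j) = real j + 1"
     "2*Suc j+4 = 2*j+6" "Suc j+1 = j+2" "Suc j + 3 = j+4" by simp_all
  have e2: "real j + 1 + 1 = real j + 2" "real j + 1 + 2 = real j + 3" by simp_all
  show ?thesis using h unfolding e e2 .
qed

lemma val_neg: "poly (pm m) (-y) = (\<Sum>i\<le>m. (-1)^i * (real i^i * y^i))"
proof -
  have s: "{..m} = insert 0 {1..m}" by auto
  have t: "(- (real i * y))^i = (-1)^i * (real i^i * y^i)" for i
  proof -
    have "(- (real i * y))^i = ((-1) * (real i * y))^i" by simp
    also have "\<dots> = (-1)^i * (real i * y)^i" by (rule power_mult_distrib)
    finally show ?thesis by (simp only: power_mult_distrib)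
  qed
  show ?thesis unfolding poly_pm s by (simp add: t)
qed

lemma lc_a:
  fixes y :: real assumes "y > 0"
  shows "(real (Suc i)^(Suc i) * y^(Suc i)) * (real (Suc i)^(Suc i) * y^(Suc i))
     \<le> (real i^i * y^i) * (real (Suc (Suc i))^(Suc (Suc i)) * y^(Suc (Suc i)))"
proof -
  have e: "2*i+2 = Suc i + Suc i" "i+2 = Suc (Suc i)" by simp_all
  have e2: "real i + 1 = real (Suc i)" "real i + 2 = real (Suc (Suc i))" by simp_all
  have c: "real (Suc i)^(Suc i) * real (Suc i)^(Suc i) \<le> real i^i * real (Suc (Suc i))^(Suc (Suc i))"
    using C1[of i] unfolding e e2 power_add .
  have yy: "y^(Suc i) * y^(Suc i) = y^i * y^(Suc (Suc i))" by (simp add: power_add[symmetric])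
  have "(real (Suc i)^(Suc i) * real (Suc i)^(Suc i)) * (y^(Suc i) * y^(Suc i))
       \<le> (real i^i * real (Suc (Suc i))^(Suc (Suc i))) * (y^i * y^(Suc (Suc i)))"
    unfolding yy by (rule mult_right_mono[OF c]) (use assms in simp)
  then show ?thesis by (simp only: ac_simps)
qed

lemma lc_b:
  fixes y :: real assumes "y > 0"
  shows "((real (Suc j)+1)^(Suc j+2) * y^(Suc j)) * ((real (Suc j)+1)^(Suc j+2) * y^(Suc j))
     \<le> ((real j+1)^(j+2) * y^j) * ((real (Suc (Suc j))+1)^(Suc (Suc j)+2) * y^(Suc (Suc j)))"
proof -
  have e: "2*j+6 = (Suc j+2) + (Suc j+2)" "j+4 = Suc (Suc j)+2" by simp_all
  have e2: "real j + 2 = real (Suc j) + 1" "real j + 3 = real (Suc (Suc j)) + 1" by simp_all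
  have c: "(real (Suc j)+1)^(Suc j+2) * (real (Suc j)+1)^(Suc j+2)
       \<le> (real j+1)^(j+2) * (real (Suc (Suc j))+1)^(Suc (Suc j)+2)"
    using C2'[of j] unfolding e e2 power_add .
  have yy: "y^(Suc j) * y^(Suc j) = y^j * y^(Suc (Suc j))" by (simp add: power_add[symmetric])
  have "((real (Suc j)+1)^(Suc j+2) * (real (Suc j)+1)^(Suc j+2)) * (y^(Suc j) * y^(Suc j))
       \<le> ((real j+1)^(j+2) * (real (Suc (Suc j))+1)^(Suc (Suc j)+2)) * (y^j * y^(Suc (Suc j)))"
    unfolding yy by (rule mult_right_mono[OF c]) (use assms in simp)
  then show ?thesis by (simp only: ac_simps)
qed


lemma deriv_pm: "DERIV (\<lambda>x. poly (pm m) x) x :> (\<Sum>i=1..m. real i * (real i * (real i * x)^(i-1)))"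
proof -
  have "DERIV (\<lambda>x. 1 + (\<Sum>i=1..m. (real i * x)^i)) x :> (\<Sum>i=1..m. real i * (real i * (real i * x)^(i-1)))"
    by (auto intro!: derivative_eq_intros)
  then show ?thesis unfolding poly_pm .
qed

lemma pderiv_val: "poly (pderiv (pm m)) x = (\<Sum>i=1..m. real i * (real i * (real i * x)^(i-1)))"
  using DERIV_unique[OF poly_DERIV deriv_pm] .

lemma dterm: "real (Suc j) * (real (Suc j) * (real (Suc j) * - y)^j) = (-1)^j * ((real j+1)^(j+2) * y^j)"
proof -
  have "(real (Suc j) * - y)^j = ((-1) * (real (Suc j) * y))^j" by simp
  also have "\<dots> = (-1)^j * (real (Suc j) * y)^j" by (rule power_mult_distrib)
  finally have h: "(real (Suc j) * - y)^j = (-1)^j * (real (Suc j)^j * y^j)" by (simp only: power_mult_distrib)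
  have "real (Suc j) * (real (Suc j) * ((-1)^j * (real (Suc j)^j * y^j)))
     = (-1)^j * ((real (Suc j) * real (Suc j) * real (Suc j)^j) * y^j)" by (simp only: ac_simps)
  also have "real (Suc j) * real (Suc j) * real (Suc j)^j = real (Suc j)^(j+2)"
    by (simp add: power_add power2_eq_square)
  finally have F: "real (Suc j) * (real (Suc j) * (real (Suc j) * - y)^j) = (-1)^j * (real (Suc j)^(j+2) * y^j)"
    unfolding h .
  have e: "real (Suc j) = real j + 1" by simp
  show ?thesis using F unfolding e .
qed

lemma pderiv_pos:
  assumes "odd m"
  shows "poly (pderiv (pm m)) x > 0"
proof -
  obtain k where m: "m = Suc (2*k)" using assms oddE by fastforce
  show ?thesis
  proof (cases "x \<ge> 0")
    case True
    have "(\<Sum>i=1..m. real i * (real i * (real i * x)^(i-1))) \<ge> (\<lambda>i. real i * (real i * (real i * x)^(i-1))) 1"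
      by (rule member_le_sum) (use True m in auto)
    then show ?thesis unfolding pderiv_val by simp
  next
    case False
    define y where "y = -x"
    have y: "y > 0" "x = -y" using False unfolding y_def by auto
    have "(\<Sum>i=1..m. real i * (real i * (real i * x)^(i-1)))
       = (\<Sum>j=0..2*k. real (Suc j) * (real (Suc j) * (real (Suc j) * x)^(Suc j - 1)))"
      unfolding m by (subst sum.shift_bounds_cl_Suc_ivl[symmetric]) simp
    also have "\<dots> = (\<Sum>j\<le>2*k. (-1)^j * ((real j+1)^(j+2) * y^j))"
      unfolding atLeast0AtMost y(2) using dterm by simp
    also have "\<dots> > 0"
      by (rule alt_logconvex) (use y(1) lc_b in auto)
    finally show ?thesis unfolding pderiv_val .
  qed
qed

lemma pm_even_pos:
  assumes "even m"
  shows "poly (pm m) x > 0"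
proof (cases "x \<ge> 0")
  case True
  have "(\<Sum>i=1..m. (real i * x)^i) \<ge> 0" by (rule sum_nonneg) (use True in simp)
  then show ?thesis unfolding poly_pm by simp
next
  case False
  obtain k where m: "m = 2*k" using assms by blast
  define y where "y = -x"
  have y: "y > 0" "x = -y" using False unfolding y_def by auto
  have "(\<Sum>i\<le>2*k. (-1)^i * (real i^i * y^i)) > 0"
  proof (rule alt_logconvex)
    show "0 < real i ^ i * y ^ i" for i using y(1) by (cases i) auto
  qed (use lc_a y(1) in auto)
  then show ?thesis unfolding y(2) val_neg m .
qed

theorem theorem8p4:
  fixes m :: nat
  shows "(even m \<longrightarrow> (\<forall>x::real. poly (pm m) x \<noteq> 0))
       \<and> (odd m \<longrightarrow> (\<Sum>x\<in>{x::real. poly (pm m) x = 0}. order x (pm m)) = 1)"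
proof (intro conjI impI allI)
  fix x :: real assume "even m"
  then show "poly (pm m) x \<noteq> 0" using pm_even_pos by (metis less_irrefl)
next
  assume odd: "odd m"
  obtain k where m: "m = 2*k+1" using odd oddE by blast
  have mono: "poly (pm m) a < poly (pm m) b" if "a < b" for a b
    by (rule DERIV_pos_imp_increasing[OF that]) (use pderiv_pos[OF odd] poly_DERIV in blast)
  have p0: "poly (pm m) 0 = 1" unfolding poly_pm by (simp, rule sum.neutral, auto)
  have mon2: "real i^i * 2^i \<le> real (Suc i)^(Suc i) * 2^(Suc i)" for i
  proof (rule mult_mono)
    have "real i^i \<le> real (Suc i)^i" by (rule power_mono) auto
    also have "\<dots> \<le> real (Suc i)^(Suc i)" by (rule power_increasing) auto
    finally show "real i^i \<le> real (Suc i)^(Suc i)" .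
  qed auto
  have "(\<Sum>i\<le>2*k+1. (-1)^i * (real i^i * 2^i)) < 0"
    by (rule alt_neg) (use mon2 in auto)
  then have pn: "poly (pm m) (-2) < 0" unfolding val_neg m .
  obtain r where r: "-2 < r" "r < 0" "poly (pm m) r = 0"
    using poly_IVT_pos[of "-2" 0 "pm m"] pn p0 by auto
  have Z: "{x::real. poly (pm m) x = 0} = {r}"
  proof (auto simp: r(3))
    fix s assume s: "poly (pm m) s = 0"
    show "s = r"
    proof (rule ccontr)
      assume "s \<noteq> r"
      then have "s < r \<or> r < s" by auto
      then show False using mono[of s r] mono[of r s] s r(3) by auto
    qed
  qed
  have nz: "pm m \<noteq> 0" using p0 by auto
  have "poly (pderiv (pm m)) r \<noteq> 0" using pderiv_pos[OF odd, of r] by simp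
  then have "order r (pderiv (pm m)) = 0" using order_root by blast
  then have "order r (pm m) = 1" using order_pderiv[OF nz r(3)] by simp
  then show "(\<Sum>x\<in>{x::real. poly (pm m) x = 0}. order x (pm m)) = 1" unfolding Z by simp
qed

end
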